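(* Let $G=\mathbb{Z}_2\times\mathbb{Z}_4$ and let $\theta$ be a normalised orthomorphism of $G$. Then $|A_{44}|=|A_{42}|=|A_{24}|=2$ and $|A_{22}|=1$.
   Context: $G$ is written multiplicatively with identity $e$; $o(g)$ is the order of $g$. A normalised orthomorphism of $G$ is a bijection $\theta\colon G\to G$ with $\theta(e)=e$ such that $x\mapsto x^{-1}\theta(x)$ is also a bijection of $G$. For such $\theta$: $A_{44}=\{x: o(x)=4, o(\theta(x))=4\}$, $A_{42}=\{x: o(x)=4, o(\theta(x))=2\}$, $A_{24}=\{x: o(x)=2, o(\theta(x))=4\}$, $A_{22}=\{x: o(x)=2, o(\theta(x))=2\}$. *)

theory Defs
  imports "HOL-Algebra.Algebra"
begin

definition Z2xZ4 :: "(int \<times> int) monoid" where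
  "Z2xZ4 = integer_mod_group 2 \<times>\<times> integer_mod_group 4"

definition normalised_orthomorphism :: "('a, 'b) monoid_scheme \<Rightarrow> ('a \<Rightarrow> 'a) \<Rightarrow> bool" where
  "normalised_orthomorphism G \<theta> \<longleftrightarrow>
     bij_betw \<theta> (carrier G) (carrier G) \<and>
     \<theta> \<one>\<^bsub>G\<^esub> = \<one>\<^bsub>G\<^esub> \<and>
     bij_betw (\<lambda>x. inv\<^bsub>G\<^esub> x \<otimes>\<^bsub>G\<^esub> \<theta> x) (carrier G) (carrier G)"

definition A_set :: "('a, 'b) monoid_scheme \<Rightarrow> ('a \<Rightarrow> 'a) \<Rightarrow> nat \<Rightarrow> nat \<Rightarrow> 'a set" where
  "A_set G \<theta> i j = {x \<in> carrier G. group.ord G x = i \<and> group.ord G (\<theta> x) = j}"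

end

theory Submission
  imports Defs
begin
lemma grp: "group Z2xZ4"
  unfolding Z2xZ4_def by (intro DirProd_group group_integer_mod_group)
lemma carr: "carrier Z2xZ4 = {0..<2} \<times> {0..<4}"
  unfolding Z2xZ4_def by (simp add: carrier_integer_mod_group)
lemma carr8: "carrier Z2xZ4 = {(0,0),(0,1),(0,2),(0,3),(1,0),(1,1),(1,2),(1,3)}"
proof -
  have "{0..<2::int} = {0,1}" "{0..<4::int} = {0,1,2,3}" by auto
  then show ?thesis unfolding carr by auto
qed
lemma one_Z: "\<one>\<^bsub>Z2xZ4\<^esub> = (0,0)"
  unfolding Z2xZ4_def by simp
lemma pow_pair: "pow Z2xZ4 (a,b) n = ((int n * a) mod 2, (int n * b) mod 4)"
  unfolding Z2xZ4_def
proof (induction n)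
  case 0 then show ?case by simp
next
  case (Suc n)
  then show ?case by (simp add: mod_add_left_eq mod_add_right_eq algebra_simps)
qed

lemma ord_Z: assumes "x \<in> carrier Z2xZ4"
  shows "group.ord Z2xZ4 x = (if odd (snd x) then 4 else if x = (0,0) then 1 else 2)"
proof -
  interpret group Z2xZ4 by (rule grp)
  have key: "\<And>d. ord x = d \<longleftrightarrow> (\<forall>n. ((int n * fst x) mod 2 = 0 \<and> (int n * snd x) mod 4 = 0) \<longleftrightarrow> d dvd n)"
    using ord_unique[OF assms] pow_pair[of "fst x" "snd x"] one_Z by simp
  show ?thesis unfolding key using assms unfolding carr8
    by (elim insertE emptyE; hypsubst; simp; presburger)
qed

lemma inv_Z: assumes "x \<in> carrier Z2xZ4"
  shows "inv\<^bsub>Z2xZ4\<^esub> x = ((- fst x) mod 2, (- snd x) mod 4)"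
  using assms unfolding Z2xZ4_def
  by (cases x) (simp add: carrier_integer_mod_group)

lemma card_split: "finite S \<Longrightarrow> card {x\<in>S. A x} = card {x\<in>S. A x \<and> B x} + card {x\<in>S. A x \<and> \<not> B x}"
proof -
  assume f: "finite S"
  have "{x\<in>S. A x} = {x\<in>S. A x \<and> B x} \<union> {x\<in>S. A x \<and> \<not> B x}" by auto
  moreover have "card ({x\<in>S. A x \<and> B x} \<union> {x\<in>S. A x \<and> \<not> B x}) = card {x\<in>S. A x \<and> B x} + card {x\<in>S. A x \<and> \<not> B x}"
    by (rule card_Un_disjoint) (use f in auto)
  ultimately show ?thesis by simp
qed

lemma card_bij_pred: assumes "bij_betw f S S"
  shows "card {x\<in>S. P (f x)} = card {y\<in>S. P y}"
proof -
  have "f ` {x\<in>S. P (f x)} = {y\<in>S. P y}" using assms unfolding bij_betw_def by auto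
  moreover have "inj_on f {x\<in>S. P (f x)}" using assms unfolding bij_betw_def by (auto intro: inj_on_subset)
  ultimately show ?thesis by (metis card_image)
qed

lemma phi_par: assumes "x \<in> carrier Z2xZ4" "y \<in> carrier Z2xZ4"
  shows "odd (snd (inv\<^bsub>Z2xZ4\<^esub> x \<otimes>\<^bsub>Z2xZ4\<^esub> y)) \<longleftrightarrow> (odd (snd x) \<noteq> odd (snd y))"
  using inv_Z[OF assms(1)] unfolding Z2xZ4_def mult_DirProd' by simp presburger

theorem corollary1:
  fixes \<theta> :: "int \<times> int \<Rightarrow> int \<times> int"
  assumes "normalised_orthomorphism Z2xZ4 \<theta>"
  shows "card (A_set Z2xZ4 \<theta> 4 4) = 2 \<and> card (A_set Z2xZ4 \<theta> 4 2) = 2 \<and>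
         card (A_set Z2xZ4 \<theta> 2 4) = 2 \<and> card (A_set Z2xZ4 \<theta> 2 2) = 1"
proof -
  define S where "S = carrier Z2xZ4"
  define P where "P = (\<lambda>y::int\<times>int. odd (snd y))"
  have bt: "bij_betw \<theta> S S" and t0: "\<theta> (0,0) = (0,0)"
    and bp: "bij_betw (\<lambda>x. inv\<^bsub>Z2xZ4\<^esub> x \<otimes>\<^bsub>Z2xZ4\<^esub> \<theta> x) S S"
    using assms unfolding normalised_orthomorphism_def S_def one_Z by auto
  have fin: "finite S" unfolding S_def carr8 by simp
  have S8: "card S = 8" unfolding S_def carr8 by simp
  have SP: "{y\<in>S. P y} = {(0,1),(0,3),(1,1),(1,3)}" unfolding S_def carr8 P_def by auto
  have cP: "card {y\<in>S. P y} = 4" unfolding SP by simp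
  have tS: "\<And>x. x \<in> S \<Longrightarrow> \<theta> x \<in> S" using bt unfolding bij_betw_def by auto
  have c1: "card {x\<in>S. P (\<theta> x)} = 4" using card_bij_pred[OF bt] cP by simp
  have c2: "card {x\<in>S. P x \<noteq> P (\<theta> x)} = 4"
  proof -
    have "{x\<in>S. P x \<noteq> P (\<theta> x)} = {x\<in>S. P (inv\<^bsub>Z2xZ4\<^esub> x \<otimes>\<^bsub>Z2xZ4\<^esub> \<theta> x)}"
    proof (rule Collect_cong)
      fix x
      show "(x \<in> S \<and> P x \<noteq> P (\<theta> x)) = (x \<in> S \<and> P (inv\<^bsub>Z2xZ4\<^esub> x \<otimes>\<^bsub>Z2xZ4\<^esub> \<theta> x))"
        using phi_par[of x "\<theta> x"] tS[of x] unfolding P_def S_def by blast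
    qed
    then show ?thesis using card_bij_pred[OF bp, of P] cP by simp
  qed
  define a where "a = card {x\<in>S. P x \<and> P (\<theta> x)}"
  define b where "b = card {x\<in>S. P x \<and> \<not> P (\<theta> x)}"
  define c where "c = card {x\<in>S. \<not> P x \<and> P (\<theta> x)}"
  define d where "d = card {x\<in>S. \<not> P x \<and> \<not> P (\<theta> x)}"
  have e1: "a + b = 4" using card_split[OF fin, of P "\<lambda>x. P (\<theta> x)"] cP a_def b_def by simp
  have e2: "a + c = 4" using card_split[OF fin, of "\<lambda>x. P (\<theta> x)" P] c1 a_def c_def
    by (simp add: conj_commute)
  have e3: "b + c = 4"
  proof -
    have "card {x\<in>S. P x \<noteq> P (\<theta> x)} = card {x\<in>S. P x \<noteq> P (\<theta> x) \<and> P x} + card {x\<in>S. P x \<noteq> P (\<theta> x) \<and> \<not> P x}"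
      by (rule card_split[OF fin])
    moreover have "{x\<in>S. P x \<noteq> P (\<theta> x) \<and> P x} = {x\<in>S. P x \<and> \<not> P (\<theta> x)}" by auto
    moreover have "{x\<in>S. P x \<noteq> P (\<theta> x) \<and> \<not> P x} = {x\<in>S. \<not> P x \<and> P (\<theta> x)}" by auto
    ultimately show ?thesis using c2 b_def c_def by simp
  qed
  have e4: "a + b + c + d = 8"
  proof -
    have "card {x\<in>S. True} = card {x\<in>S. True \<and> P x} + card {x\<in>S. True \<and> \<not> P x}"
      by (rule card_split[OF fin])
    moreover have "card {x\<in>S. \<not> P x} = c + d"
      using card_split[OF fin, of "\<lambda>x. \<not> P x" "\<lambda>x. P (\<theta> x)"] c_def d_def by simp
    ultimately show ?thesis using S8 e1 cP by simp
  qed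
  have ordS: "\<And>x. x \<in> S \<Longrightarrow> group.ord Z2xZ4 x = (if P x then 4 else if x = (0,0) then 1 else 2)"
    using ord_Z unfolding S_def P_def by simp
  have tz: "\<And>x. x \<in> S \<Longrightarrow> \<theta> x = (0,0) \<longleftrightarrow> x = (0,0)"
  proof -
    fix x assume "x \<in> S"
    moreover have "(0,0) \<in> S" unfolding S_def carr8 by simp
    ultimately show "\<theta> x = (0,0) \<longleftrightarrow> x = (0,0)" using bt t0 unfolding bij_betw_def inj_on_def by metis
  qed
  have z0: "\<not> P (0,0)" unfolding P_def by simp
  have o4: "\<And>x. x \<in> S \<Longrightarrow> group.ord Z2xZ4 x = 4 \<longleftrightarrow> P x" using ordS by simp
  have o2: "\<And>x. x \<in> S \<Longrightarrow> group.ord Z2xZ4 x = 2 \<longleftrightarrow> \<not> P x \<and> x \<noteq> (0,0)" using ordS by simp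
  have A44: "A_set Z2xZ4 \<theta> 4 4 = {x\<in>S. P x \<and> P (\<theta> x)}"
    unfolding A_set_def S_def[symmetric]
    by (rule Collect_cong) (metis o4 tS)
  have A42: "A_set Z2xZ4 \<theta> 4 2 = {x\<in>S. P x \<and> \<not> P (\<theta> x)}"
    unfolding A_set_def S_def[symmetric]
    by (rule Collect_cong) (metis o4 o2 tS tz z0)
  have A24: "A_set Z2xZ4 \<theta> 2 4 = {x\<in>S. \<not> P x \<and> P (\<theta> x)}"
    unfolding A_set_def S_def[symmetric]
    by (rule Collect_cong) (metis o4 o2 tS tz z0)
  have A22: "A_set Z2xZ4 \<theta> 2 2 = {x\<in>S. \<not> P x \<and> \<not> P (\<theta> x)} - {(0,0)}"
    unfolding A_set_def S_def[symmetric]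
    by (auto simp: o2 tS tz)
  have "(0,0) \<in> {x\<in>S. \<not> P x \<and> \<not> P (\<theta> x)}" using t0 z0 unfolding S_def carr8 by simp
  then have "card (A_set Z2xZ4 \<theta> 2 2) = d - 1" unfolding A22 d_def using fin by simp
  moreover have "a = 2" "b = 2" "c = 2" "d = 2" using e1 e2 e3 e4 by linarith+
  ultimately show ?thesis using A44 A42 A24 a_def b_def c_def by simp
qed
end
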